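(* If $G/H$ has a $G$-invariant essential Codazzi tensor field $A$, then the non-associative algebra $(\mathfrak{m},[\cdot,\cdot]_{\mathfrak{m}})$ cannot be nilpotent or split-solvable.
   Context: Let $G$ be a Lie group and $H$ a closed Lie subgroup, with Lie algebras $\mathfrak{g}$ and $\mathfrak{h}$. Assume $G/H$ is reductive: there is a vector space direct sum decomposition $\mathfrak{g} = \mathfrak{h}\oplus\mathfrak{m}$ with $\mathfrak{m}$ invariant under ${\rm Ad}(H)$. Write $[X,Y]_{\mathfrak{m}}$ for the $\mathfrak{m}$-component of the Lie bracket $[X,Y]$, so that $(\mathfrak{m},[\cdot,\cdot]_{\mathfrak{m}})$ is a non-associative algebra; $\mathfrak{m}$ is identified with $T_{eH}(G/H)$. Equip $G/H$ with a $G$-invariant Riemannian metric $\langle\cdot,\cdot\rangle$ and its Levi-Civita connection $\nabla$. A twice-covariant symmetric tensor field $A$ is Codazzi if $(\nabla_X A)(Y,Z) = (\nabla_Y A)(X,Z)$ for all vector fields $X,Y,Z$. For a $G$-invariant such $A$, decompose $\mathfrak{m} = \mathfrak{m}_1\oplus\cdots\oplus\mathfrak{m}_r$ orthogonally into the eigenspaces of $A$ (relative to $\langle\cdot,\cdot\rangle$) with eigenvalues $\lambda_1<\cdots<\lambda_r$. The Codazzi tensor field $A$ is called essential if $\nabla A \neq 0$ and none of the eigenspaces $\mathfrak{m}_i$ is an ideal of $(\mathfrak{m},[\cdot,\cdot]_{\mathfrak{m}})$. A non-associative algebra $\mathfrak{a}$ is nilpotent if there is a positive integer $t$ such that every product of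 $t$ elements of $\mathfrak{a}$, however associated, vanishes; it is split-solvable if there is a chain $\mathfrak{a} = \mathfrak{a}_0 \supseteq \cdots \supseteq \mathfrak{a}_p = 0$ of ideals of $\mathfrak{a}$ with $\dim(\mathfrak{a}_i/\mathfrak{a}_{i+1}) = 1$ for all $i$. *)

theory Defs
  imports "HOL-Analysis.Analysis"
begin

text \<open>Algebraic (infinitesimal) model of a reductive homogeneous space G/H.
  The Lie algebra g of G is a finite-dimensional real vector space of type 'v
  (class euclidean_space is used only to get finite dimension; its inner product
  plays no role) with Lie bracket br; h and m are subspaces of g.\<close>

definition lie_bracket :: "('v::real_vector \<Rightarrow> 'v \<Rightarrow> 'v) \<Rightarrow> bool" where
  "lie_bracket br \<longleftrightarrow> bilinear br \<and> (\<forall>x. br x x = 0) \<and>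
     (\<forall>x y z. br x (br y z) + br y (br z x) + br z (br x y) = 0)"

text \<open>Reductive decomposition g = h + m (direct sum), h a subalgebra, [h,m] in m
  (the infinitesimal form of Ad(H)-invariance of m).\<close>
definition reductive_decomp :: "('v::real_vector \<Rightarrow> 'v \<Rightarrow> 'v) \<Rightarrow> 'v set \<Rightarrow> 'v set \<Rightarrow> bool" where
  "reductive_decomp br h m \<longleftrightarrow> subspace h \<and> subspace m \<and> h \<inter> m = {0} \<and>
     (\<forall>x. \<exists>a\<in>h. \<exists>b\<in>m. x = a + b) \<and>
     (\<forall>a\<in>h. \<forall>b\<in>h. br a b \<in> h) \<and> (\<forall>a\<in>h. \<forall>b\<in>m. br a b \<in> m)"

definition mcomp :: "'v::real_vector set \<Rightarrow> 'v set \<Rightarrow> 'v \<Rightarrow> 'v" where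
  "mcomp h m x = (THE b. b \<in> m \<and> x - b \<in> h)"

definition brm :: "('v::real_vector \<Rightarrow> 'v \<Rightarrow> 'v) \<Rightarrow> 'v set \<Rightarrow> 'v set \<Rightarrow> 'v \<Rightarrow> 'v \<Rightarrow> 'v" where
  "brm br h m x y = mcomp h m (br x y)"

text \<open>A G-invariant Riemannian metric on G/H: an Ad(H)-invariant (here: ad(h)-invariant)
  inner product on m.\<close>
definition invariant_metric ::
  "('v::real_vector \<Rightarrow> 'v \<Rightarrow> 'v) \<Rightarrow> 'v set \<Rightarrow> 'v set \<Rightarrow> ('v \<Rightarrow> 'v \<Rightarrow> real) \<Rightarrow> bool" where
  "invariant_metric br h m ip \<longleftrightarrow> bilinear ip \<and>
     (\<forall>x\<in>m. \<forall>y\<in>m. ip x y = ip y x) \<and> (\<forall>x\<in>m. x \<noteq> 0 \<longrightarrow> ip x x > 0) \<and>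
     (\<forall>z\<in>h. \<forall>x\<in>m. \<forall>y\<in>m. ip (br z x) y + ip x (br z y) = 0)"

text \<open>A G-invariant symmetric twice-covariant tensor field on G/H: an ad(h)-invariant
  symmetric bilinear form on m.\<close>
definition invariant_sym_tensor ::
  "('v::real_vector \<Rightarrow> 'v \<Rightarrow> 'v) \<Rightarrow> 'v set \<Rightarrow> 'v set \<Rightarrow> ('v \<Rightarrow> 'v \<Rightarrow> real) \<Rightarrow> bool" where
  "invariant_sym_tensor br h m A \<longleftrightarrow> bilinear A \<and>
     (\<forall>x\<in>m. \<forall>y\<in>m. A x y = A y x) \<and>
     (\<forall>z\<in>h. \<forall>x\<in>m. \<forall>y\<in>m. A (br z x) y + A x (br z y) = 0)"

definition nomizu_U ::
  "('v::real_vector \<Rightarrow> 'v \<Rightarrow> 'v) \<Rightarrow> 'v set \<Rightarrow> 'v set \<Rightarrow> ('v \<Rightarrow> 'v \<Rightarrow> real) \<Rightarrow> 'v \<Rightarrow> 'v \<Rightarrow> 'v" where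
  "nomizu_U br h m ip x y = (THE u. u \<in> m \<and> (\<forall>z\<in>m.
      ip u z = (ip (brm br h m z x) y + ip x (brm br h m z y)) / 2))"

text \<open>Nomizu map of the Levi-Civita connection at the origin eH:
  Lambda(X)Y = 1/2 [X,Y]_m + U(X,Y).\<close>
definition lc_Lambda ::
  "('v::real_vector \<Rightarrow> 'v \<Rightarrow> 'v) \<Rightarrow> 'v set \<Rightarrow> 'v set \<Rightarrow> ('v \<Rightarrow> 'v \<Rightarrow> real) \<Rightarrow> 'v \<Rightarrow> 'v \<Rightarrow> 'v" where
  "lc_Lambda br h m ip x y = (1/2) *\<^sub>R brm br h m x y + nomizu_U br h m ip x y"

text \<open>Covariant derivative (nabla_X A)(Y,Z) at the origin of a G-invariant tensor A.\<close>
definition cov_deriv ::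
  "('v::real_vector \<Rightarrow> 'v \<Rightarrow> 'v) \<Rightarrow> 'v set \<Rightarrow> 'v set \<Rightarrow> ('v \<Rightarrow> 'v \<Rightarrow> real) \<Rightarrow>
     ('v \<Rightarrow> 'v \<Rightarrow> real) \<Rightarrow> 'v \<Rightarrow> 'v \<Rightarrow> 'v \<Rightarrow> real" where
  "cov_deriv br h m ip A x y z =
     - A (lc_Lambda br h m ip x y) z - A y (lc_Lambda br h m ip x z)"

definition codazzi ::
  "('v::real_vector \<Rightarrow> 'v \<Rightarrow> 'v) \<Rightarrow> 'v set \<Rightarrow> 'v set \<Rightarrow> ('v \<Rightarrow> 'v \<Rightarrow> real) \<Rightarrow> ('v \<Rightarrow> 'v \<Rightarrow> real) \<Rightarrow> bool" where
  "codazzi br h m ip A \<longleftrightarrow> (\<forall>x\<in>m. \<forall>y\<in>m. \<forall>z\<in>m.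
      cov_deriv br h m ip A x y z = cov_deriv br h m ip A y x z)"

definition eigenspace_rel :: "'v::real_vector set \<Rightarrow> ('v \<Rightarrow> 'v \<Rightarrow> real) \<Rightarrow> ('v \<Rightarrow> 'v \<Rightarrow> real) \<Rightarrow> real \<Rightarrow> 'v set" where
  "eigenspace_rel m ip A lam = {x \<in> m. \<forall>y\<in>m. A x y = lam * ip x y}"

definition is_eigenvalue_rel :: "'v::real_vector set \<Rightarrow> ('v \<Rightarrow> 'v \<Rightarrow> real) \<Rightarrow> ('v \<Rightarrow> 'v \<Rightarrow> real) \<Rightarrow> real \<Rightarrow> bool" where
  "is_eigenvalue_rel m ip A lam \<longleftrightarrow> eigenspace_rel m ip A lam \<noteq> {0}"

definition alg_ideal :: "'v::real_vector set \<Rightarrow> ('v \<Rightarrow> 'v \<Rightarrow> 'v) \<Rightarrow> 'v set \<Rightarrow> bool" where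
  "alg_ideal m mul V \<longleftrightarrow> subspace V \<and> V \<subseteq> m \<and>
     (\<forall>x\<in>m. \<forall>v\<in>V. mul x v \<in> V \<and> mul v x \<in> V)"

definition essential_codazzi ::
  "('v::real_vector \<Rightarrow> 'v \<Rightarrow> 'v) \<Rightarrow> 'v set \<Rightarrow> 'v set \<Rightarrow> ('v \<Rightarrow> 'v \<Rightarrow> real) \<Rightarrow> ('v \<Rightarrow> 'v \<Rightarrow> real) \<Rightarrow> bool" where
  "essential_codazzi br h m ip A \<longleftrightarrow> codazzi br h m ip A \<and>
     (\<exists>x\<in>m. \<exists>y\<in>m. \<exists>z\<in>m. cov_deriv br h m ip A x y z \<noteq> 0) \<and>
     (\<forall>lam. is_eigenvalue_rel m ip A lam \<longrightarrow>
        \<not> alg_ideal m (brm br h m) (eigenspace_rel m ip A lam))"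

inductive prod_of :: "'v set \<Rightarrow> ('v \<Rightarrow> 'v \<Rightarrow> 'v) \<Rightarrow> nat \<Rightarrow> 'v \<Rightarrow> bool"
  for m mul where
  single: "x \<in> m \<Longrightarrow> prod_of m mul 1 x"
| mult: "prod_of m mul i x \<Longrightarrow> prod_of m mul j y \<Longrightarrow> prod_of m mul (i + j) (mul x y)"

definition nilpotent_alg :: "'v::real_vector set \<Rightarrow> ('v \<Rightarrow> 'v \<Rightarrow> 'v) \<Rightarrow> bool" where
  "nilpotent_alg m mul \<longleftrightarrow> (\<exists>t::nat. t > 0 \<and> (\<forall>x. prod_of m mul t x \<longrightarrow> x = 0))"

definition split_solvable_alg :: "'v::real_vector set \<Rightarrow> ('v \<Rightarrow> 'v \<Rightarrow> 'v) \<Rightarrow> bool" where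
  "split_solvable_alg m mul \<longleftrightarrow> (\<exists>(a::nat \<Rightarrow> 'v set) p. a 0 = m \<and> a p = {0} \<and>
     (\<forall>i\<le>p. alg_ideal m mul (a i)) \<and>
     (\<forall>i<p. a (Suc i) \<subseteq> a i \<and> dim (a i) = dim (a (Suc i)) + 1))"

end

theory Submission
  imports Defs
begin


lemma quad_le0_imp:
  fixes D E :: real
  assumes "\<And>t. 2*t*D + t^2*E \<le> 0"
  shows "D = 0"
proof (rule ccontr)
  assume "D \<noteq> 0"
  define t where "t = D / (\<bar>E\<bar> + 1)"
  have pos: "\<bar>E\<bar> + 1 > 0" by simp
  have "2*t*D + t^2*E \<le> 0" by (rule assms)
  hence "(2*t*D + t^2*E) * (\<bar>E\<bar>+1)^2 \<le> 0"
    by (simp add: mult_nonpos_nonneg)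
  moreover have "(2*t*D + t^2*E) * (\<bar>E\<bar>+1)^2 = D^2 * (2*\<bar>E\<bar> + 2 + E)"
  proof -
    have tt: "t * (\<bar>E\<bar> + 1) = D" unfolding t_def using pos by simp
    have "(2*t*D + t^2*E) * (\<bar>E\<bar>+1)^2 = 2*D*(t*(\<bar>E\<bar>+1))*(\<bar>E\<bar>+1) + (t*(\<bar>E\<bar>+1))^2*E"
      by (simp add: power2_eq_square algebra_simps)
    also have "\<dots> = D^2 * (2*\<bar>E\<bar> + 2 + E)" unfolding tt by (simp add: power2_eq_square algebra_simps)
    finally show ?thesis .
  qed
  moreover have "D^2 > 0" using \<open>D \<noteq> 0\<close> by simp
  moreover have "2*\<bar>E\<bar> + 2 + E > 0" by (simp add: abs_if)
  ultimately show False by (metis mult_pos_pos not_le)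
qed

lemma max_ratio:
  fixes m :: "'v::euclidean_space set" and ip F :: "'v \<Rightarrow> 'v \<Rightarrow> real"
  assumes sub: "subspace m" and nz: "m \<noteq> {0}"
    and ipb: "bilinear ip" and ips: "\<forall>x\<in>m. \<forall>y\<in>m. ip x y = ip y x"
    and ipp: "\<forall>x\<in>m. x \<noteq> 0 \<longrightarrow> ip x x > 0"
    and Fb: "bilinear F" and Fs: "\<forall>x\<in>m. \<forall>y\<in>m. F x y = F y x"
  shows "\<exists>x0\<in>m. x0 \<noteq> 0 \<and> (\<exists>lam. (\<forall>y\<in>m. F x0 y = lam * ip x0 y) \<and> (\<forall>y\<in>m. F y y \<le> lam * ip y y))"
proof -
  define K where "K = m \<inter> sphere 0 1"
  have cK: "compact K" unfolding K_def
    using closed_subspace[OF sub] compact_sphere by (metis compact_Int_closed inf_commute)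
  obtain v where v: "v \<in> m" "v \<noteq> 0" using nz sub subspace_0 by blast
  have "(1 / norm v) *\<^sub>R v \<in> K" unfolding K_def using v sub
    by (simp add: subspace_scale)
  hence neK: "K \<noteq> {}" by blast
  define g where "g x = F x x / ip x x" for x
  have cF: "continuous_on K (\<lambda>x. F x x)"
    by (rule bilinear_continuous_on_compose[OF continuous_on_id continuous_on_id Fb])
  have cI: "continuous_on K (\<lambda>x. ip x x)"
    by (rule bilinear_continuous_on_compose[OF continuous_on_id continuous_on_id ipb])
  have Kpos: "\<forall>x\<in>K. ip x x \<noteq> 0" unfolding K_def using ipp by fastforce
  have cg: "continuous_on K g" unfolding g_def
    using continuous_on_divide[OF cF cI] Kpos by blast
  obtain x0 where x0: "x0 \<in> K" "\<forall>y\<in>K. g y \<le> g x0"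
    using continuous_attains_sup[OF cK neK cg] by blast
  define lam where "lam = g x0"
  have x0m: "x0 \<in> m" and x0nz: "x0 \<noteq> 0" using x0 unfolding K_def by auto
  have ip0: "ip x0 x0 > 0" using ipp x0m x0nz by blast
  have F00: "F x0 x0 = lam * ip x0 x0" unfolding lam_def g_def using ip0 by simp
  have le: "F y y \<le> lam * ip y y" if ym: "y \<in> m" for y
  proof (cases "y = 0")
    case True then show ?thesis using bilinear_lzero[OF Fb] bilinear_lzero[OF ipb] by simp
  next
    case False
    define c where "c = 1 / norm y"
    have cpos: "c > 0" using False unfolding c_def by simp
    have "c *\<^sub>R y \<in> K" unfolding K_def c_def using ym sub False by (simp add: subspace_scale)
    hence "g (c *\<^sub>R y) \<le> lam" using x0 lam_def by blast
    moreover have "g (c *\<^sub>R y) = F y y / ip y y"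
      unfolding g_def using cpos
      by (simp add: bilinear_lmul[OF Fb] bilinear_rmul[OF Fb] bilinear_lmul[OF ipb] bilinear_rmul[OF ipb])
    moreover have "ip y y > 0" using ipp ym False by blast
    ultimately show ?thesis by (simp add: divide_le_eq)
  qed
  have eig: "F x0 y = lam * ip x0 y" if ym: "y \<in> m" for y
  proof -
    have "2*t*(F x0 y - lam * ip x0 y) + t^2*(F y y - lam * ip y y) \<le> 0" for t
    proof -
      have "x0 + t *\<^sub>R y \<in> m" using sub x0m ym by (simp add: subspace_add subspace_scale)
      hence "F (x0 + t *\<^sub>R y) (x0 + t *\<^sub>R y) \<le> lam * ip (x0 + t *\<^sub>R y) (x0 + t *\<^sub>R y)" by (rule le)
      moreover have "F (x0 + t *\<^sub>R y) (x0 + t *\<^sub>R y) = F x0 x0 + 2*t*F x0 y + t^2 * F y y"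
        using Fs x0m ym
        by (simp add: bilinear_ladd[OF Fb] bilinear_radd[OF Fb] bilinear_lmul[OF Fb] bilinear_rmul[OF Fb] power2_eq_square algebra_simps)
      moreover have "ip (x0 + t *\<^sub>R y) (x0 + t *\<^sub>R y) = ip x0 x0 + 2*t*ip x0 y + t^2 * ip y y"
        using ips x0m ym
        by (simp add: bilinear_ladd[OF ipb] bilinear_radd[OF ipb] bilinear_lmul[OF ipb] bilinear_rmul[OF ipb] power2_eq_square algebra_simps)
      ultimately show ?thesis using F00 by (simp add: algebra_simps)
    qed
    hence "F x0 y - lam * ip x0 y = 0" by (rule quad_le0_imp)
    thus ?thesis by simp
  qed
  show ?thesis using x0m x0nz eig le by blast
qed



lemma riesz:
  fixes m :: "'v::euclidean_space set" and ip :: "'v \<Rightarrow> 'v \<Rightarrow> real" and f :: "'v \<Rightarrow> real"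
  assumes sub: "subspace m"
    and ipb: "bilinear ip" and ips: "\<forall>x\<in>m. \<forall>y\<in>m. ip x y = ip y x"
    and ipp: "\<forall>x\<in>m. x \<noteq> 0 \<longrightarrow> ip x x > 0"
    and fl: "linear f"
  shows "\<exists>u\<in>m. \<forall>w\<in>m. ip u w = f w"
proof (cases "\<forall>w\<in>m. f w = 0")
  case True
  then show ?thesis using sub subspace_0 bilinear_lzero[OF ipb] by fastforce
next
  case False
  then obtain y1 where y1: "y1 \<in> m" "f y1 \<noteq> 0" by blast
  hence nz: "m \<noteq> {0}" using linear_0[OF fl] by auto
  define F where "F x y = f x * f y" for x y
  have Fb: "bilinear F" unfolding F_def bilinear_def
    using fl by (simp add: linear_iff algebra_simps)
  have Fs: "\<forall>x\<in>m. \<forall>y\<in>m. F x y = F y x" unfolding F_def by simp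
  obtain x0 lam where x0: "x0 \<in> m" "x0 \<noteq> 0" "\<forall>y\<in>m. F x0 y = lam * ip x0 y" "\<forall>y\<in>m. F y y \<le> lam * ip y y"
    using max_ratio[OF sub nz ipb ips ipp Fb Fs] by blast
  have "f y1 * f y1 > 0" using y1 by (metis mult_neg_neg mult_pos_pos linorder_neqE_linordered_idom)
  hence "lam * ip y1 y1 > 0" using x0(4) y1(1) unfolding F_def by fastforce
  moreover have "ip y1 y1 > 0" using ipp y1 linear_0[OF fl] by fastforce
  ultimately have lpos: "lam > 0" by (simp add: zero_less_mult_iff)
  have "f x0 * f x0 = lam * ip x0 x0" using x0(3) x0(1) unfolding F_def by blast
  moreover have "ip x0 x0 > 0" using ipp x0 by blast
  ultimately have fx0: "f x0 \<noteq> 0" using lpos by auto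
  define u where "u = (lam / f x0) *\<^sub>R x0"
  have "u \<in> m" unfolding u_def using sub x0 by (simp add: subspace_scale)
  moreover have "ip u w = f w" if "w \<in> m" for w
  proof -
    have "f x0 * f w = lam * ip x0 w" using x0(3) that unfolding F_def by blast
    thus ?thesis unfolding u_def using fx0 by (simp add: bilinear_lmul[OF ipb] field_simps)
  qed
  ultimately show ?thesis by blast
qed

lemma riesz_unique:
  fixes m :: "'v::euclidean_space set" and ip :: "'v \<Rightarrow> 'v \<Rightarrow> real"
  assumes sub: "subspace m"
    and ipb: "bilinear ip"
    and ipp: "\<forall>x\<in>m. x \<noteq> 0 \<longrightarrow> ip x x > 0"
    and u: "u \<in> m" "\<forall>w\<in>m. ip u w = g w" and v: "v \<in> m" "\<forall>w\<in>m. ip v w = g w"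
  shows "u = v"
proof -
  have d: "u - v \<in> m" using sub u v by (simp add: subspace_diff)
  have "ip (u - v) (u - v) = 0" using u v d by (simp add: bilinear_lsub[OF ipb])
  thus ?thesis using ipp d by fastforce
qed

definition eigvecs :: "'v::real_vector set \<Rightarrow> ('v \<Rightarrow> 'v \<Rightarrow> real) \<Rightarrow> ('v \<Rightarrow> 'v \<Rightarrow> real) \<Rightarrow> 'v set" where
  "eigvecs m ip A = {x\<in>m. \<exists>a. \<forall>w\<in>m. A x w = a * ip x w}"

lemma eigen_span_aux:
  fixes m0 :: "'v::euclidean_space set" and ip A :: "'v \<Rightarrow> 'v \<Rightarrow> real"
  assumes ipb: "bilinear ip" and ips: "\<forall>x\<in>m0. \<forall>y\<in>m0. ip x y = ip y x"
    and ipp: "\<forall>x\<in>m0. x \<noteq> 0 \<longrightarrow> ip x x > 0"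
    and Ab: "bilinear A" and As: "\<forall>x\<in>m0. \<forall>y\<in>m0. A x y = A y x"
  shows "subspace m \<Longrightarrow> m \<subseteq> m0 \<Longrightarrow> m \<subseteq> span (eigvecs m ip A)"
proof (induction "dim m" arbitrary: m rule: less_induct)
  case less
  show ?case
  proof (cases "m = {0}")
    case True then show ?thesis by (simp add: span_0)
  next
    case False
    have ips': "\<forall>x\<in>m. \<forall>y\<in>m. ip x y = ip y x" and ipp': "\<forall>x\<in>m. x \<noteq> 0 \<longrightarrow> ip x x > 0"
      and As': "\<forall>x\<in>m. \<forall>y\<in>m. A x y = A y x" using ips ipp As less.prems by blast+
    obtain x0 lam where x0: "x0 \<in> m" "x0 \<noteq> 0" "\<forall>y\<in>m. A x0 y = lam * ip x0 y"
      using max_ratio[OF less.prems(1) False ipb ips' ipp' Ab As'] by blast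
    define m' where "m' = {y\<in>m. ip x0 y = 0}"
    have sub': "subspace m'" unfolding m'_def subspace_def using less.prems(1)
      by (simp add: subspace_0 subspace_add subspace_scale bilinear_radd[OF ipb] bilinear_rmul[OF ipb] bilinear_rzero[OF ipb])
    have m'm: "m' \<subseteq> m" unfolding m'_def by auto
    have x0n: "x0 \<notin> m'" unfolding m'_def using ipp' x0 by fastforce
    have "dim m' < dim m"
    proof (rule dim_psubset)
      have e1: "span m' = m'" and e2: "span m = m" using sub' less.prems(1) by simp_all
      show "span m' \<subset> span m" unfolding e1 e2 using m'm x0 x0n by auto
    qed
    hence IH: "m' \<subseteq> span (eigvecs m' ip A)" using less.hyps sub' m'm less.prems(2) by blast
    have ip0: "ip x0 x0 > 0" using ipp' x0 by blast
    have dec: "w - (ip x0 w / ip x0 x0) *\<^sub>R x0 \<in> m'" if "w \<in> m" for w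
      unfolding m'_def using that x0 less.prems(1) ip0
      by (simp add: subspace_diff subspace_scale bilinear_rsub[OF ipb] bilinear_rmul[OF ipb])
    have sub_e: "eigvecs m' ip A \<subseteq> eigvecs m ip A"
    proof
      fix x assume "x \<in> eigvecs m' ip A"
      then obtain a where xm': "x \<in> m'" and xa: "\<forall>w\<in>m'. A x w = a * ip x w"
        unfolding eigvecs_def by blast
      have xm: "x \<in> m" using xm' m'm by blast
      have "A x w = a * ip x w" if wm: "w \<in> m" for w
      proof -
        define c where "c = ip x0 w / ip x0 x0"
        define w' where "w' = w - c *\<^sub>R x0"
        have w'm: "w' \<in> m'" unfolding w'_def c_def using dec wm by blast
        have w: "w = w' + c *\<^sub>R x0" unfolding w'_def by simp
        have "ip x0 x = 0" using xm' unfolding m'_def by blast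
        hence i1: "ip x x0 = 0" using ips' xm x0 by metis
        have a1: "A x x0 = 0"
        proof -
          have "A x x0 = A x0 x" using As' xm x0(1) by blast
          also have "\<dots> = lam * ip x0 x" using x0(3) xm by blast
          finally show ?thesis using \<open>ip x0 x = 0\<close> by simp
        qed
        show ?thesis unfolding w using xa w'm i1 a1
          by (simp add: bilinear_radd[OF ipb] bilinear_rmul[OF ipb] bilinear_radd[OF Ab] bilinear_rmul[OF Ab])
      qed
      thus "x \<in> eigvecs m ip A" unfolding eigvecs_def using xm by blast
    qed
    have x0e: "x0 \<in> eigvecs m ip A" unfolding eigvecs_def using x0 by blast
    show ?thesis
    proof
      fix w assume wm: "w \<in> m"
      define c where "c = ip x0 w / ip x0 x0"
      have "w - c *\<^sub>R x0 \<in> span (eigvecs m ip A)"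
        using dec[OF wm] IH sub_e span_mono unfolding c_def by blast
      moreover have "c *\<^sub>R x0 \<in> span (eigvecs m ip A)" using x0e by (simp add: span_base span_scale)
      ultimately have "(w - c *\<^sub>R x0) + c *\<^sub>R x0 \<in> span (eigvecs m ip A)" by (rule span_add)
      thus "w \<in> span (eigvecs m ip A)" by simp
    qed
  qed
qed



lemma skew_pow:
  fixes m :: "'v::euclidean_space set" and ip :: "'v \<Rightarrow> 'v \<Rightarrow> real"
  assumes Lm: "\<forall>u\<in>m. L u \<in> m"
    and inv: "\<forall>u\<in>m. \<forall>v\<in>m. ip (T (L u)) (T v) + ip (T u) (T (L v)) = 0"
  shows "\<forall>u\<in>m. \<forall>v\<in>m. ip (T ((L^^j) u)) (T v) = (-1)^j * ip (T u) (T ((L^^j) v))"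
proof (induction j)
  case 0 then show ?case by simp
next
  case (Suc j)
  have powm: "(L^^k) u \<in> m" if "u \<in> m" for u k using that Lm by (induction k) auto
  show ?case
  proof (intro ballI)
    fix u v assume u: "u \<in> m" and v: "v \<in> m"
    have "ip (T ((L^^Suc j) u)) (T v) = ip (T (L ((L^^j) u))) (T v)" by simp
    also have "\<dots> = - ip (T ((L^^j) u)) (T (L v))" proof -
      have "ip (T (L ((L^^j) u))) (T v) + ip (T ((L^^j) u)) (T (L v)) = 0" using inv powm[OF u] v by blast
      thus ?thesis by linarith
    qed
    also have "\<dots> = - ((-1)^j * ip (T u) (T ((L^^j) (L v))))" proof -
      have "L v \<in> m" using Lm v by blast
      thus ?thesis using Suc.IH u by simp
    qed
    also have "(L^^j) (L v) = (L^^Suc j) v" by (simp add: funpow_Suc_right del: funpow.simps)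
    finally show "ip (T ((L^^Suc j) u)) (T v) = (-1)^Suc j * ip (T u) (T ((L^^Suc j) v))" by simp
  qed
qed

lemma skew_nil:
  fixes m :: "'v::euclidean_space set" and ip :: "'v \<Rightarrow> 'v \<Rightarrow> real"
  assumes Lm: "\<forall>u\<in>m. L u \<in> m" and Tm: "\<forall>u\<in>m. T u \<in> m"
    and ipb: "bilinear ip"
    and ipp: "\<forall>x\<in>m. x \<noteq> 0 \<longrightarrow> ip x x > 0"
    and inv: "\<forall>u\<in>m. \<forall>v\<in>m. ip (T (L u)) (T v) + ip (T u) (T (L v)) = 0"
    and nil: "\<forall>u\<in>m. T ((L^^n) u) = 0"
  shows "\<forall>u\<in>m. T (L u) = 0"
proof -
  define Q where "Q k \<longleftrightarrow> (\<forall>u\<in>m. T ((L^^k) u) = 0)" for k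
  have powm: "(L^^k) u \<in> m" if "u \<in> m" for u k using that Lm by (induction k) auto
  have mono: "Q k \<Longrightarrow> Q (k + j)" for k j
  proof (induction j)
    case 0 then show ?case by simp
  next
    case (Suc j)
    then have "Q (k+j)" by simp
    show ?case unfolding Q_def
    proof
      fix u assume u: "u \<in> m"
      have "L u \<in> m" using Lm u by blast
      hence "T ((L^^(k+j)) (L u)) = 0" using \<open>Q (k+j)\<close> unfolding Q_def by blast
      moreover have "(L^^(k+j)) (L u) = (L^^(k + Suc j)) u"
        by (metis add_Suc_right comp_apply funpow_Suc_right)
      ultimately show "T ((L^^(k + Suc j)) u) = 0" by simp
    qed
  qed
  have half: "Q (2*k) \<Longrightarrow> Q k" for k
  proof -
    assume q: "Q (2*k)"
    show "Q k" unfolding Q_def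
    proof
      fix u assume u: "u \<in> m"
      have "ip (T ((L^^k) ((L^^k) u))) (T u) = (-1)^k * ip (T ((L^^k) u)) (T ((L^^k) u))"
        using skew_pow[where m=m and L=L and T=T and ip=ip and j=k, OF Lm inv] powm[OF u] u by simp
      moreover have "(L^^k) ((L^^k) u) = (L^^(2*k)) u" by (simp add: funpow_add mult_2)
      ultimately have "(-1)^k * ip (T ((L^^k) u)) (T ((L^^k) u)) = 0"
        using q u unfolding Q_def by (simp add: bilinear_lzero[OF ipb])
      hence "ip (T ((L^^k) u)) (T ((L^^k) u)) = 0" by simp
      thus "T ((L^^k) u) = 0" using ipp Tm powm[OF u] by fastforce
    qed
  qed
  have main: "Q n' \<Longrightarrow> Q 1" for n'
  proof (induction n' rule: less_induct)
    case (less n')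
    show ?case
    proof (cases "n' \<le> 1")
      case True then show ?thesis using mono[OF less.prems, of "1 - n'"] by simp
    next
      case False
      define k where "k = (n' + 1) div 2"
      have "k < n'" "n' \<le> 2*k" using False unfolding k_def by auto
      then have "Q (2*k)" using mono[OF less.prems, of "2*k - n'"] by simp
      then have "Q k" by (rule half)
      then show ?thesis using less.IH \<open>k < n'\<close> by blast
    qed
  qed
  have "Q 1" using main nil unfolding Q_def by blast
  thus ?thesis unfolding Q_def by simp
qed

lemma skew_chain:
  fixes m :: "'v::euclidean_space set" and ip :: "'v \<Rightarrow> 'v \<Rightarrow> real" and a :: "nat \<Rightarrow> 'v set"
  assumes Lm: "\<forall>u\<in>m. L u \<in> m" and Tm: "\<forall>u\<in>m. T u \<in> m"
    and Ll: "linear L" and Tl: "linear T"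
    and ipb: "bilinear ip" and ips: "\<forall>x\<in>m. \<forall>y\<in>m. ip x y = ip y x"
    and ipp: "\<forall>x\<in>m. x \<noteq> 0 \<longrightarrow> ip x x > 0"
    and inv: "\<forall>u\<in>m. \<forall>v\<in>m. ip (T (L u)) (T v) + ip (T u) (T (L v)) = 0"
    and a0: "a 0 = m" and ap: "a p = {0}"
    and ai: "\<forall>i\<le>p. subspace (a i) \<and> a i \<subseteq> m \<and> (\<forall>v\<in>a i. L v \<in> a i)"
    and dims: "\<forall>i<p. a (Suc i) \<subseteq> a i \<and> dim (a i) = dim (a (Suc i)) + 1"
  shows "\<forall>u\<in>m. T (L u) = 0"
proof -
  define R where "R i \<longleftrightarrow> (\<forall>u\<in>a i. T (L u) = 0)" for i
  have step: "R i" if ip': "i < p" and R1: "R (Suc i)" for i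
  proof -
    have sa: "subspace (a i)" "subspace (a (Suc i))" using ai ip' by auto
    have am: "a i \<subseteq> m" "a (Suc i) \<subseteq> m" using ai ip' by auto
    have inc: "a (Suc i) \<subseteq> a i" and dd: "dim (a i) = dim (a (Suc i)) + 1" using dims ip' by auto
    obtain e where e: "e \<in> a i" "e \<notin> a (Suc i)"
    proof -
      have "\<not> a i \<subseteq> a (Suc i)"
      proof
        assume "a i \<subseteq> a (Suc i)"
        hence "a i = a (Suc i)" using inc by blast
        thus False using dd by simp
      qed
      thus ?thesis using that by blast
    qed
    have ssp: "span (a (Suc i)) = a (Suc i)" using sa by simp
    have eq: "span (insert e (a (Suc i))) = a i"
    proof -
      have "span (insert e (a (Suc i))) = span (a i)"
      proof (rule dim_eq_span)
        show "insert e (a (Suc i)) \<subseteq> a i" using e inc by blast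
        show "dim (a i) \<le> dim (insert e (a (Suc i)))" proof -
          have "e \<notin> span (a (Suc i))" unfolding ssp using e by blast
          thus ?thesis using dd by (simp add: dim_insert)
        qed
      qed
      thus ?thesis using sa by simp
    qed
    have Le: "T (L e) = 0"
    proof -
      have "L e \<in> span (insert e (a (Suc i)))" using eq ai ip' e by auto
      then obtain s where w: "L e - s *\<^sub>R e \<in> a (Suc i)" using ssp by (auto simp: span_insert)
      define w where "w = L e - s *\<^sub>R e"
      have wi: "w \<in> a (Suc i)" using w unfolding w_def .
      have em: "e \<in> m" using e am by blast
      have wm: "w \<in> m" using wi am by blast
      have Lem: "L e \<in> m" using Lm em by blast
      have Twl: "T (L w) = 0" using R1 wi unfolding R_def by blast
      have z1: "ip (T (L e)) (T e) = 0"
      proof -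
        have "ip (T (L e)) (T e) + ip (T e) (T (L e)) = 0" using inv em by blast
        moreover have "ip (T e) (T (L e)) = ip (T (L e)) (T e)" using ips Tm em Lem by blast
        ultimately show ?thesis by simp
      qed
      have z2: "ip (T (L e)) (T w) = 0"
      proof -
        have "ip (T (L e)) (T w) + ip (T e) (T (L w)) = 0" using inv em wm by blast
        thus ?thesis using Twl by (simp add: bilinear_rzero[OF ipb])
      qed
      have "L e = w + s *\<^sub>R e" unfolding w_def by simp
      hence "T (L e) = T w + s *\<^sub>R T e" using Tl by (metis linear_add linear_scale)
      hence "ip (T (L e)) (T (L e)) = ip (T (L e)) (T w) + s * ip (T (L e)) (T e)"
        by (simp add: bilinear_radd[OF ipb] bilinear_rmul[OF ipb])
      hence "ip (T (L e)) (T (L e)) = 0" using z1 z2 by simp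
      thus ?thesis using ipp Tm Lem by fastforce
    qed
    show ?thesis unfolding R_def
    proof
      fix u assume u: "u \<in> a i"
      then have "u \<in> span (insert e (a (Suc i)))" using eq by simp
      then obtain s where "u - s *\<^sub>R e \<in> a (Suc i)" using ssp by (auto simp: span_insert)
      hence "T (L (u - s *\<^sub>R e)) = 0" using R1 unfolding R_def by blast
      moreover have "T (L (u - s *\<^sub>R e)) = T (L u) - s *\<^sub>R T (L e)"
        using Ll Tl by (simp add: linear_diff linear_scale)
      ultimately show "T (L u) = 0" using Le by simp
    qed
  qed
  have "\<forall>k\<le>p. R (p - k)"
  proof (intro allI impI)
    fix k assume "k \<le> p"
    thus "R (p - k)"
    proof (induction k)
      case 0 then show ?case unfolding R_def using ap Ll Tl by (simp add: linear_0)
    next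
      case (Suc k)
      then have "R (p - k)" by simp
      moreover have "p - k = Suc (p - Suc k)" "p - Suc k < p" using Suc.prems by auto
      ultimately show ?case using step by metis
    qed
  qed
  hence "R 0" by (metis diff_self_eq_0 order_refl)
  thus ?thesis unfolding R_def a0 .
qed



lemma lin_zero_span:
  fixes f :: "'a::real_vector \<Rightarrow> 'b::real_vector"
  assumes "linear f" "x \<in> span B" "\<forall>b\<in>B. f b = 0"
  shows "f x = 0"
  using assms linear_eq_0_on_span by blast

lemma bil_zero_span:
  fixes G :: "'a::real_vector \<Rightarrow> 'a \<Rightarrow> 'b::real_vector"
  assumes G: "bilinear G" and z: "\<forall>x\<in>E. \<forall>y\<in>E. G x y = 0"
    and x: "x \<in> span E" and y: "y \<in> span E"
  shows "G x y = 0"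
proof -
  have "\<forall>b\<in>E. G x b = 0"
  proof
    fix b assume b: "b \<in> E"
    have "linear (\<lambda>x. G x b)" using G unfolding bilinear_def by blast
    thus "G x b = 0" using lin_zero_span x z b by blast
  qed
  moreover have "linear (G x)" using G unfolding bilinear_def by blast
  ultimately show ?thesis using lin_zero_span y by blast
qed



locale cz =
  fixes br :: "'v::euclidean_space \<Rightarrow> 'v \<Rightarrow> 'v" and h m :: "'v set" and ip A :: "'v \<Rightarrow> 'v \<Rightarrow> real"
  assumes lie: "lie_bracket br" and red: "reductive_decomp br h m"
    and met: "invariant_metric br h m ip" and sym: "invariant_sym_tensor br h m A"
begin

lemma brb: "bilinear br" using lie unfolding lie_bracket_def by blast
lemma subh: "subspace h" and sub: "subspace m" and hm: "h \<inter> m = {0}"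
  and decomp: "\<forall>x. \<exists>a\<in>h. \<exists>b\<in>m. x = a + b"
  using red unfolding reductive_decomp_def by blast+
lemma ipb: "bilinear ip" and ips: "\<forall>x\<in>m. \<forall>y\<in>m. ip x y = ip y x"
  and ipp: "\<forall>x\<in>m. x \<noteq> 0 \<longrightarrow> ip x x > 0"
  using met unfolding invariant_metric_def by blast+
lemma Ab: "bilinear A" and As: "\<forall>x\<in>m. \<forall>y\<in>m. A x y = A y x"
  using sym unfolding invariant_sym_tensor_def by blast+

lemma mcomp_ex: "\<exists>!b. b \<in> m \<and> x - b \<in> h"
proof -
  obtain a b where ab: "a \<in> h" "b \<in> m" "x = a + b" using decomp by blast
  show ?thesis
  proof (rule ex1I[of _ b])
    show "b \<in> m \<and> x - b \<in> h" using ab by simp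
    fix b' assume b': "b' \<in> m \<and> x - b' \<in> h"
    have 1: "b' - b \<in> m" using b' ab sub by (simp add: subspace_diff)
    have e: "b' - b = (x - b) - (x - b')" by simp
    have "x - b \<in> h" using ab by simp
    hence 2: "b' - b \<in> h" unfolding e using b' subh subspace_diff by blast
    have "b' - b \<in> h \<inter> m" using 1 2 by blast
    hence "b' - b = 0" using hm by blast
    thus "b' = b" by simp
  qed
qed

lemma mcomp_prop: "mcomp h m x \<in> m" "x - mcomp h m x \<in> h"
  using theI'[OF mcomp_ex[of x]] unfolding mcomp_def by blast+

lemma mcomp_eq: "b \<in> m \<Longrightarrow> x - b \<in> h \<Longrightarrow> mcomp h m x = b"
  using mcomp_ex[of x] mcomp_prop[of x] by blast

lemma mcomp_lin: "linear (mcomp h m)"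
proof (rule linearI)
  fix x y
  show "mcomp h m (x + y) = mcomp h m x + mcomp h m y"
  proof (rule mcomp_eq)
    show "mcomp h m x + mcomp h m y \<in> m" using mcomp_prop sub by (simp add: subspace_add)
    have "x + y - (mcomp h m x + mcomp h m y) = (x - mcomp h m x) + (y - mcomp h m y)" by simp
    thus "x + y - (mcomp h m x + mcomp h m y) \<in> h" using mcomp_prop subh by (metis subspace_add)
  qed
next
  fix c :: real and x
  show "mcomp h m (c *\<^sub>R x) = c *\<^sub>R mcomp h m x"
  proof (rule mcomp_eq)
    show "c *\<^sub>R mcomp h m x \<in> m" using mcomp_prop sub by (simp add: subspace_scale)
    have "c *\<^sub>R x - c *\<^sub>R mcomp h m x = c *\<^sub>R (x - mcomp h m x)" by (simp add: algebra_simps)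
    thus "c *\<^sub>R x - c *\<^sub>R mcomp h m x \<in> h" using mcomp_prop subh by (metis subspace_scale)
  qed
qed

abbreviation "b \<equiv> brm br h m"

lemma b_bil: "bilinear b"
  unfolding bilinear_def brm_def
  using brb mcomp_lin unfolding bilinear_def by (auto intro: linear_compose[unfolded o_def])

lemma b_m: "b x y \<in> m" unfolding brm_def by (rule mcomp_prop)

lemma br_anti: "br y x = - br x y"
proof -
  have "br (x + y) (x + y) = 0" using lie unfolding lie_bracket_def by blast
  moreover have "br x x = 0" "br y y = 0" using lie unfolding lie_bracket_def by blast+
  ultimately have "br y x + br x y = 0"
    by (simp add: bilinear_ladd[OF brb] bilinear_radd[OF brb])
  thus ?thesis by (simp add: eq_neg_iff_add_eq_0)
qed

lemma b_anti: "b y x = - b x y"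
  unfolding brm_def br_anti[of y x] using mcomp_lin by (simp add: linear_neg)

lemma riesz_ex1: "linear f \<Longrightarrow> \<exists>!u. u \<in> m \<and> (\<forall>w\<in>m. ip u w = f w)"
proof -
  assume fl: "linear f"
  obtain s where s: "s \<in> m" "\<forall>w\<in>m. ip s w = f w" using riesz[OF sub ipb ips ipp fl] by blast
  show ?thesis
  proof (rule ex1I[of _ s])
    show "s \<in> m \<and> (\<forall>w\<in>m. ip s w = f w)" using s by blast
    fix u assume "u \<in> m \<and> (\<forall>w\<in>m. ip u w = f w)"
    thus "u = s" using riesz_unique[OF sub ipb ipp, of u f s] s by blast
  qed
qed

definition S :: "'v \<Rightarrow> 'v" where
  "S u = (THE s. s \<in> m \<and> (\<forall>w\<in>m. ip s w = A u w))"

lemma S_ex: "\<exists>!s. s \<in> m \<and> (\<forall>w\<in>m. ip s w = A u w)"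
proof -
  have "linear (A u)" using Ab unfolding bilinear_def by blast
  thus ?thesis by (rule riesz_ex1)
qed

lemma S_prop: "S u \<in> m" "\<forall>w\<in>m. ip (S u) w = A u w"
  using theI'[OF S_ex[of u]] unfolding S_def by blast+

lemma S_eq: "s \<in> m \<Longrightarrow> \<forall>w\<in>m. ip s w = A u w \<Longrightarrow> S u = s"
  using S_ex[of u] S_prop[of u] by blast

lemma S_lin: "linear S"
proof (rule linearI)
  fix x y
  show "S (x + y) = S x + S y"
    by (rule S_eq) (use S_prop sub in \<open>simp_all add: subspace_add bilinear_ladd[OF ipb] bilinear_ladd[OF Ab]\<close>)
next
  fix c :: real and x
  show "S (c *\<^sub>R x) = c *\<^sub>R S x"
    by (rule S_eq) (use S_prop sub in \<open>simp_all add: subspace_scale bilinear_lmul[OF ipb] bilinear_lmul[OF Ab]\<close>)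
qed

lemma U_ex: "\<exists>!u. u \<in> m \<and> (\<forall>z\<in>m. ip u z = (ip (b z x) y + ip x (b z y)) / 2)"
proof -
  have "linear (\<lambda>z. (ip (b z x) y + ip x (b z y)) / 2)"
    by (rule linearI) (simp_all add: bilinear_ladd[OF b_bil] bilinear_lmul[OF b_bil]
          bilinear_ladd[OF ipb] bilinear_lmul[OF ipb] bilinear_radd[OF ipb] bilinear_rmul[OF ipb] field_simps)
  thus ?thesis by (rule riesz_ex1)
qed

lemma U_prop: "nomizu_U br h m ip x y \<in> m"
  "\<forall>z\<in>m. ip (nomizu_U br h m ip x y) z = (ip (b z x) y + ip x (b z y)) / 2"
  using theI'[OF U_ex[of x y]] unfolding nomizu_U_def by blast+

abbreviation "Lam \<equiv> lc_Lambda br h m ip"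

lemma Lam_m: "Lam x y \<in> m"
  unfolding lc_Lambda_def using sub b_m U_prop(1) by (simp add: subspace_add subspace_scale)

definition beta where "beta x y z = ip (b x y) z"
definition Kb where "Kb x y z = (beta x y z + beta z x y + beta z y x) / 2"

lemma beta_anti: "beta y x z = - beta x y z"
  unfolding beta_def b_anti[of y x] by (simp add: bilinear_lneg[OF ipb])

lemma Kb_lin3: "Kb x y (c *\<^sub>R z) = c * Kb x y z"
  unfolding Kb_def beta_def
  by (simp add: bilinear_rmul[OF ipb] bilinear_lmul[OF b_bil] bilinear_rmul[OF b_bil] bilinear_lmul[OF ipb] algebra_simps)

lemma Kb_anti: "Kb x z y = - Kb x y z"
  unfolding Kb_def by (simp add: beta_anti[of y x z] beta_anti[of x z y] beta_anti[of y z x] field_simps)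

lemma Lam_ip: "x \<in> m \<Longrightarrow> y \<in> m \<Longrightarrow> z \<in> m \<Longrightarrow> ip (Lam x y) z = Kb x y z"
proof -
  assume xm: "x \<in> m" and ym: "y \<in> m" and zm: "z \<in> m"
  have "ip (Lam x y) z = (1/2) * ip (b x y) z + ip (nomizu_U br h m ip x y) z"
    unfolding lc_Lambda_def by (simp add: bilinear_ladd[OF ipb] bilinear_lmul[OF ipb])
  also have "\<dots> = (1/2) * ip (b x y) z + (ip (b z x) y + ip x (b z y)) / 2"
    using U_prop(2) zm by simp
  also have "ip x (b z y) = ip (b z y) x" using ips xm b_m by blast
  finally show ?thesis unfolding Kb_def beta_def by simp
qed

lemma cov_formula: "x \<in> m \<Longrightarrow> y \<in> m \<Longrightarrow> z \<in> m \<Longrightarrow>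
  cov_deriv br h m ip A x y z = - (Kb x y (S z) + Kb x z (S y))"
proof -
  assume xm: "x \<in> m" and ym: "y \<in> m" and zm: "z \<in> m"
  have "A (Lam x y) z = A z (Lam x y)" using As Lam_m zm by blast
  also have "\<dots> = ip (S z) (Lam x y)" using S_prop(2) Lam_m by metis
  also have "\<dots> = ip (Lam x y) (S z)" using ips Lam_m S_prop(1) by blast
  also have "\<dots> = Kb x y (S z)" using Lam_ip xm ym S_prop(1) by blast
  finally have 1: "A (Lam x y) z = Kb x y (S z)" .
  have "A y (Lam x z) = ip (S y) (Lam x z)" using S_prop(2) Lam_m by metis
  also have "\<dots> = ip (Lam x z) (S y)" using ips Lam_m S_prop(1) by blast
  also have "\<dots> = Kb x z (S y)" using Lam_ip xm zm S_prop(1) by blast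
  finally have 2: "A y (Lam x z) = Kb x z (S y)" .
  show ?thesis unfolding cov_deriv_def 1 2 by simp
qed

lemma cov_sym23: "cov_deriv br h m ip A x y z = cov_deriv br h m ip A x z y"
  if "x \<in> m" "y \<in> m" "z \<in> m"
proof -
  have "A (Lam x y) z = A z (Lam x y)" "A y (Lam x z) = A (Lam x z) y" using As Lam_m that by blast+
  thus ?thesis unfolding cov_deriv_def by simp
qed

definition "E = eigvecs m ip A"

lemma E_span: "m \<subseteq> span E"
  unfolding E_def using eigen_span_aux[OF ipb ips ipp Ab As sub] by blast

lemma S_eig: "y \<in> m \<Longrightarrow> \<forall>w\<in>m. A y w = c * ip y w \<Longrightarrow> S y = c *\<^sub>R y"
  by (rule S_eq) (use sub in \<open>simp_all add: subspace_scale bilinear_lmul[OF ipb]\<close>)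

lemma cov_eig: "x \<in> m \<Longrightarrow> y \<in> m \<Longrightarrow> z \<in> m \<Longrightarrow> \<forall>w\<in>m. A y w = bb * ip y w \<Longrightarrow>
   \<forall>w\<in>m. A z w = c * ip z w \<Longrightarrow> cov_deriv br h m ip A x y z = (bb - c) * Kb x y z"
proof -
  assume xm: "x \<in> m" and ym: "y \<in> m" and zm: "z \<in> m" and ey: "\<forall>w\<in>m. A y w = bb * ip y w"
    and ez: "\<forall>w\<in>m. A z w = c * ip z w"
  have "cov_deriv br h m ip A x y z = - (Kb x y (S z) + Kb x z (S y))" using cov_formula xm ym zm by blast
  also have "\<dots> = - (c * Kb x y z + bb * Kb x z y)"
    using S_eig[OF zm ez] S_eig[OF ym ey] Kb_lin3 by simp
  also have "Kb x z y = - Kb x y z" by (rule Kb_anti)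
  finally show ?thesis by (simp add: algebra_simps)
qed

end


context cz begin

abbreviation "cov \<equiv> cov_deriv br h m ip A"
abbreviation "eig x a \<equiv> x \<in> m \<and> (\<forall>w\<in>m. A x w = a * ip x w)"

lemma claimP:
  assumes cod: "codazzi br h m ip A"
    and ex: "eig x a" and ey: "eig y bb" and ez: "eig z c"
  shows "(c-a)^2 * beta x y z + (bb-a)^2 * beta x z y = 0"
proof -
  have xm: "x \<in> m" and ym: "y \<in> m" and zm: "z \<in> m" using ex ey ez by blast+
  have c1: "cov x y z = cov y x z" and c2: "cov x z y = cov z x y"
    using cod xm ym zm unfolding codazzi_def by blast+
  have s: "cov x y z = cov x z y" using cov_sym23 xm ym zm by blast
  have e1: "cov x y z = (bb - c) * Kb x y z" using cov_eig xm ym zm ey ez by blast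
  have e2: "cov y x z = (a - c) * Kb y x z" using cov_eig xm ym zm ex ez by blast
  have e3: "cov z x y = (a - bb) * Kb z x y" using cov_eig xm ym zm ex ey by blast
  define P1 where "P1 = beta x y z"
  define P2 where "P2 = beta x z y"
  define P3 where "P3 = beta y z x"
  have K1: "Kb x y z = (P1 - P2 - P3) / 2"
    unfolding Kb_def P1_def P2_def P3_def by (simp add: beta_anti[of x z y] beta_anti[of y z x])
  have K2: "Kb y x z = (- P1 - P3 - P2) / 2"
    unfolding Kb_def P1_def P2_def P3_def
    by (simp add: beta_anti[of x y z] beta_anti[of x z y] beta_anti[of y z x])
  have K3: "Kb z x y = (- P2 + P3 - P1) / 2"
    unfolding Kb_def P1_def P2_def P3_def
    by (simp add: beta_anti[of x y z] beta_anti[of x z y])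
  have E1: "(bb - c) * ((P1 - P2 - P3) / 2) - (a - c) * ((- P1 - P3 - P2) / 2) = 0"
    using c1 e1 e2 K1 K2 by simp
  have E2: "(bb - c) * ((P1 - P2 - P3) / 2) - (a - bb) * ((- P2 + P3 - P1) / 2) = 0"
    using c2 s e1 e3 K1 K3 by simp
  have "(c-a)^2 * P1 + (bb-a)^2 * P2 =
      (a - c) * ((bb - c) * ((P1 - P2 - P3) / 2) - (a - c) * ((- P1 - P3 - P2) / 2))
    - (bb - a) * ((bb - c) * ((P1 - P2 - P3) / 2) - (a - bb) * ((- P2 + P3 - P1) / 2))"
    by (simp add: power2_eq_square field_simps)
  also have "\<dots> = 0" using E1 E2 by simp
  finally show ?thesis unfolding P1_def P2_def by simp
qed

lemma ipT: "w \<in> m \<Longrightarrow> eig z c \<Longrightarrow> ip (S w - a *\<^sub>R w) z = (c - a) * ip w z"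
proof -
  assume wm: "w \<in> m" and ez: "eig z c"
  have "ip (S w - a *\<^sub>R w) z = ip (S w) z - a * ip w z" by (simp add: bilinear_lsub[OF ipb] bilinear_lmul[OF ipb])
  also have "ip (S w) z = A w z" using S_prop(2) ez by blast
  also have "A w z = A z w" using As wm ez by blast
  also have "\<dots> = c * ip z w" using ez wm by blast
  also have "ip z w = ip w z" using ips wm ez by blast
  finally show ?thesis by (simp add: algebra_simps)
qed

lemma inv_eig:
  assumes cod: "codazzi br h m ip A" and ex: "eig x a" and ey: "eig y bb" and ez: "eig z c"
  shows "ip (S (b x y) - a *\<^sub>R b x y) (S z - a *\<^sub>R z) + ip (S y - a *\<^sub>R y) (S (b x z) - a *\<^sub>R b x z) = 0"
proof -
  have ym: "y \<in> m" and zm: "z \<in> m" using ey ez by blast+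
  have Tz: "S z - a *\<^sub>R z = (c - a) *\<^sub>R z" using S_eig ez by (simp add: algebra_simps)
  have Ty: "S y - a *\<^sub>R y = (bb - a) *\<^sub>R y" using S_eig ey by (simp add: algebra_simps)
  have Tm: "S (b x z) - a *\<^sub>R b x z \<in> m" using S_prop(1) b_m sub by (simp add: subspace_diff subspace_scale)
  have 1: "ip (S (b x y) - a *\<^sub>R b x y) (S z - a *\<^sub>R z) = (c-a)^2 * beta x y z"
    unfolding Tz using ipT[OF b_m ez, of x y a]
    by (simp add: bilinear_rmul[OF ipb] beta_def power2_eq_square)
  have "ip (S y - a *\<^sub>R y) (S (b x z) - a *\<^sub>R b x z) = (bb - a) * ip y (S (b x z) - a *\<^sub>R b x z)"
    unfolding Ty by (simp add: bilinear_lmul[OF ipb])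
  also have "ip y (S (b x z) - a *\<^sub>R b x z) = ip (S (b x z) - a *\<^sub>R b x z) y" using ips ym Tm by blast
  also have "\<dots> = (bb - a) * beta x z y" using ipT[OF b_m ey, of x z a] by (simp add: beta_def)
  finally have 2: "ip (S y - a *\<^sub>R y) (S (b x z) - a *\<^sub>R b x z) = (bb-a)^2 * beta x z y"
    by (simp add: power2_eq_square)
  show ?thesis unfolding 1 2 using claimP[OF cod ex ey ez] by simp
qed

lemma inv_all:
  assumes cod: "codazzi br h m ip A" and ex: "eig x a"
  shows "\<forall>u\<in>m. \<forall>v\<in>m. ip (S (b x u) - a *\<^sub>R b x u) (S v - a *\<^sub>R v) + ip (S u - a *\<^sub>R u) (S (b x v) - a *\<^sub>R b x v) = 0"
proof (intro ballI)
  fix u v assume um: "u \<in> m" and vm: "v \<in> m"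
  define T where "T w = S w - a *\<^sub>R w" for w
  have Tl: "linear T" unfolding T_def using S_lin by (intro linear_compose_sub linear_compose_scale_right) (auto intro: linear_id[unfolded id_def])
  have Ll: "linear (b x)" using b_bil unfolding bilinear_def by blast
  define G where "G u v = ip (T (b x u)) (T v) + ip (T u) (T (b x v))" for u v
  have Gb: "bilinear G" unfolding bilinear_def G_def
  proof (intro conjI allI)
    fix u show "linear (\<lambda>v. ip (T (b x u)) (T v) + ip (T u) (T (b x v)))"
      by (rule linearI) (simp_all add: linear_add[OF Tl] linear_scale[OF Tl] linear_add[OF Ll] linear_scale[OF Ll]
          bilinear_radd[OF ipb] bilinear_rmul[OF ipb] algebra_simps)
  next
    fix v show "linear (\<lambda>u. ip (T (b x u)) (T v) + ip (T u) (T (b x v)))"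
      by (rule linearI) (simp_all add: linear_add[OF Tl] linear_scale[OF Tl] linear_add[OF Ll] linear_scale[OF Ll]
          bilinear_ladd[OF ipb] bilinear_lmul[OF ipb] algebra_simps)
  qed
  have "\<forall>y\<in>E. \<forall>z\<in>E. G y z = 0"
  proof (intro ballI)
    fix y z assume "y \<in> E" "z \<in> E"
    then obtain bb c where ey: "eig y bb" and ez: "eig z c" unfolding E_def eigvecs_def by blast
    show "G y z = 0" unfolding G_def T_def using inv_eig[OF cod ex ey ez] .
  qed
  hence "G u v = 0" using bil_zero_span[OF Gb] E_span um vm by blast
  thus "ip (S (b x u) - a *\<^sub>R b x u) (S v - a *\<^sub>R v) + ip (S u - a *\<^sub>R u) (S (b x v) - a *\<^sub>R b x v) = 0"
    unfolding G_def T_def .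
qed

end


context cz begin

lemma Kb_add1: "Kb (x + x') y z = Kb x y z + Kb x' y z"
  unfolding Kb_def beta_def
  by (simp add: bilinear_ladd[OF b_bil] bilinear_radd[OF b_bil] bilinear_ladd[OF ipb] bilinear_radd[OF ipb] field_simps)
lemma Kb_scale1: "Kb (c *\<^sub>R x) y z = c * Kb x y z"
  unfolding Kb_def beta_def
  by (simp add: bilinear_lmul[OF b_bil] bilinear_rmul[OF b_bil] bilinear_lmul[OF ipb] bilinear_rmul[OF ipb] field_simps)
lemma Kb_add2: "Kb x (y + y') z = Kb x y z + Kb x y' z"
  unfolding Kb_def beta_def
  by (simp add: bilinear_ladd[OF b_bil] bilinear_radd[OF b_bil] bilinear_ladd[OF ipb] bilinear_radd[OF ipb] field_simps)
lemma Kb_scale2: "Kb x (c *\<^sub>R y) z = c * Kb x y z"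
  unfolding Kb_def beta_def
  by (simp add: bilinear_lmul[OF b_bil] bilinear_rmul[OF b_bil] bilinear_lmul[OF ipb] bilinear_rmul[OF ipb] field_simps)
lemma Kb_add3: "Kb x y (z + z') = Kb x y z + Kb x y z'"
  unfolding Kb_def beta_def
  by (simp add: bilinear_ladd[OF b_bil] bilinear_radd[OF b_bil] bilinear_ladd[OF ipb] bilinear_radd[OF ipb] field_simps)

definition C where "C x y z = - (Kb x y (S z) + Kb x z (S y))"

lemma C_bil12: "bilinear (\<lambda>x y. C x y z)"
  unfolding bilinear_def C_def
  by (intro conjI allI linearI)
     (simp_all add: Kb_add1 Kb_scale1 Kb_add2 Kb_scale2 Kb_add3 Kb_lin3 linear_add[OF S_lin] linear_scale[OF S_lin] algebra_simps)

lemma C_lin3: "linear (C x y)"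
  unfolding C_def
  by (intro linearI)
     (simp_all add: Kb_add1 Kb_scale1 Kb_add2 Kb_scale2 Kb_add3 Kb_lin3 linear_add[OF S_lin] linear_scale[OF S_lin] algebra_simps)

lemma cov_zero:
  assumes cod: "codazzi br h m ip A"
    and H: "\<forall>x a. eig x a \<longrightarrow> (\<forall>u\<in>m. S (b x u) - a *\<^sub>R b x u = 0)"
  shows "\<forall>x\<in>m. \<forall>y\<in>m. \<forall>z\<in>m. cov x y z = 0"
proof -
  have st1: "(c - a) * beta x y z = 0" if ex: "eig x a" and ey: "eig y bb" and ez: "eig z c" for x y z a bb c
  proof -
    have "ip (S (b x y) - a *\<^sub>R b x y) z = (c - a) * ip (b x y) z" using ipT[OF b_m ez] .
    moreover have "S (b x y) - a *\<^sub>R b x y = 0" using H ex ey by blast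
    ultimately show ?thesis by (simp add: beta_def bilinear_lzero[OF ipb])
  qed
  have st2: "cov x y z = 0" if ex: "eig x a" and ey: "eig y bb" and ez: "eig z c" for x y z a bb c
  proof -
    have xm: "x \<in> m" and ym: "y \<in> m" and zm: "z \<in> m" using ex ey ez by blast+
    have e1: "cov x y z = (bb - c) * Kb x y z" using cov_eig xm ym zm ey ez by blast
    show ?thesis
    proof (cases "bb = c")
      case True then show ?thesis using e1 by simp
    next
      case bc: False
      show ?thesis
      proof (cases "a = c")
        case True
        have "cov x y z = cov y x z" using cod xm ym zm unfolding codazzi_def by blast
        also have "\<dots> = (a - c) * Kb y x z" using cov_eig xm ym zm ex ez by blast
        finally show ?thesis using True by simp
      next
        case ac: False
        show ?thesis
        proof (cases "a = bb")
          case True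
          have "cov x y z = cov x z y" using cov_sym23 xm ym zm by blast
          also have "\<dots> = cov z x y" using cod xm ym zm unfolding codazzi_def by blast
          also have "\<dots> = (a - bb) * Kb z x y" using cov_eig xm ym zm ex ey by blast
          finally show ?thesis using True by simp
        next
          case ab: False
          have "beta x y z = 0" using st1[OF ex ey ez] ac by simp
          moreover have "beta z x y = 0" using st1[OF ez ex ey] bc by simp
          moreover have "beta z y x = 0" using st1[OF ez ey ex] ac by simp
          ultimately have "Kb x y z = 0" unfolding Kb_def by simp
          thus ?thesis using e1 by simp
        qed
      qed
    qed
  qed
  show ?thesis
  proof (intro ballI)
    fix x y z assume xm: "x \<in> m" and ym: "y \<in> m" and zm: "z \<in> m"
    have 1: "C x' y' z' = 0" if "x' \<in> span E" "y' \<in> span E" "z' \<in> E" for x' y' z'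
    proof -
      have "\<forall>u\<in>E. \<forall>v\<in>E. C u v z' = 0"
      proof (intro ballI)
        fix u v assume "u \<in> E" "v \<in> E"
        then obtain a bb c where eu: "eig u a" and ev: "eig v bb" and ez: "eig z' c"
          using \<open>z' \<in> E\<close> unfolding E_def eigvecs_def by blast
        have "cov u v z' = 0" by (rule st2[OF eu ev ez])
        moreover have "cov u v z' = C u v z'" unfolding C_def using cov_formula eu ev ez by blast
        ultimately show "C u v z' = 0" by simp
      qed
      thus ?thesis using bil_zero_span[OF C_bil12, of E z' x' y'] that by blast
    qed
    have "C x y z = 0"
      using lin_zero_span[OF C_lin3, of z E x y] 1 E_span xm ym zm by blast
    thus "cov x y z = 0" using cov_formula xm ym zm unfolding C_def by simp
  qed
qed

end

lemma prod_pow: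
  assumes "x \<in> m" "u \<in> m"
  shows "prod_of m mul (Suc k) ((mul x ^^ k) u)"
proof (induction k)
  case 0 then show ?case using prod_of.single[OF assms(2), of mul] by simp
next
  case (Suc k)
  have "prod_of m mul (1 + Suc k) (mul x ((mul x ^^ k) u))"
    by (rule prod_of.mult[OF prod_of.single[OF assms(1)] Suc])
  thus ?case by simp
qed

theorem proposition2p1:
  fixes br :: "'v::euclidean_space \<Rightarrow> 'v \<Rightarrow> 'v"
    and h m :: "'v set"
    and ip A :: "'v \<Rightarrow> 'v \<Rightarrow> real"
  assumes "lie_bracket br"
    and "reductive_decomp br h m"
    and "invariant_metric br h m ip"
    and "invariant_sym_tensor br h m A"
    and "essential_codazzi br h m ip A"
  shows "\<not> nilpotent_alg m (brm br h m) \<and> \<not> split_solvable_alg m (brm br h m)"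
proof -
  interpret cz br h m ip A using assms(1-4) by unfold_locales
  have cod: "codazzi br h m ip A" using assms(5) unfolding essential_codazzi_def by blast
  obtain x0 y0 z0 where xyz: "x0 \<in> m" "y0 \<in> m" "z0 \<in> m" "cov x0 y0 z0 \<noteq> 0"
    using assms(5) unfolding essential_codazzi_def by blast
  have Tl: "linear (\<lambda>w. S w - a *\<^sub>R w)" for a
    using S_lin by (intro linear_compose_sub linear_compose_scale_right) (auto intro: linear_id[unfolded id_def])
  have Tm: "\<forall>u\<in>m. S u - a *\<^sub>R u \<in> m" for a using S_prop(1) sub by (simp add: subspace_diff subspace_scale)
  have Ll: "linear (b x)" for x using b_bil unfolding bilinear_def by blast
  have Lm: "\<forall>u\<in>m. b x u \<in> m" for x using b_m by blast
  have contra: False if H: "\<forall>x a. eig x a \<longrightarrow> (\<forall>u\<in>m. S (b x u) - a *\<^sub>R b x u = 0)"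
  proof -
    have "cov x0 y0 z0 = 0" using cov_zero[OF cod H] xyz(1-3) by blast
    thus False using xyz(4) by simp
  qed
  have n1: "\<not> nilpotent_alg m b"
  proof
    assume "nilpotent_alg m b"
    then obtain t where t: "t > 0" "\<forall>x. prod_of m b t x \<longrightarrow> x = 0" unfolding nilpotent_alg_def by blast
    have "\<forall>x a. eig x a \<longrightarrow> (\<forall>u\<in>m. S (b x u) - a *\<^sub>R b x u = 0)"
    proof (intro allI impI)
      fix x a assume ex: "eig x a"
      have nil: "\<forall>u\<in>m. S ((b x ^^ (t - 1)) u) - a *\<^sub>R (b x ^^ (t - 1)) u = 0"
      proof
        fix u assume "u \<in> m"
        hence "prod_of m b (Suc (t - 1)) ((b x ^^ (t - 1)) u)" using prod_pow[where mul=b and k="t-1", of x m u] ex by blast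
        moreover have "Suc (t - 1) = t" using t(1) by simp
        ultimately have "(b x ^^ (t - 1)) u = 0" using t(2) by metis
        thus "S ((b x ^^ (t - 1)) u) - a *\<^sub>R (b x ^^ (t - 1)) u = 0" using S_lin by (simp add: linear_0)
      qed
      show "\<forall>u\<in>m. S (b x u) - a *\<^sub>R b x u = 0"
        using skew_nil[where T="\<lambda>w. S w - a *\<^sub>R w" and L="b x", OF Lm Tm ipb ipp inv_all[OF cod ex] nil] .
    qed
    thus False by (rule contra)
  qed
  have n2: "\<not> split_solvable_alg m b"
  proof
    assume "split_solvable_alg m b"
    then obtain a p where ap: "a 0 = m" "a p = {0}" "\<forall>i\<le>p. alg_ideal m b (a i)"
      "\<forall>i<p. a (Suc i) \<subseteq> a i \<and> dim (a i) = dim (a (Suc i)) + 1"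
      unfolding split_solvable_alg_def by blast
    have "\<forall>x c. eig x c \<longrightarrow> (\<forall>u\<in>m. S (b x u) - c *\<^sub>R b x u = 0)"
    proof (intro allI impI)
      fix x c assume ex: "eig x c"
      have ai: "\<forall>i\<le>p. subspace (a i) \<and> a i \<subseteq> m \<and> (\<forall>v\<in>a i. b x v \<in> a i)"
        using ap(3) ex unfolding alg_ideal_def by blast
      show "\<forall>u\<in>m. S (b x u) - c *\<^sub>R b x u = 0"
        using skew_chain[where T="\<lambda>w. S w - c *\<^sub>R w" and L="b x", OF Lm Tm Ll Tl ipb ips ipp inv_all[OF cod ex] ap(1) ap(2) ai ap(4)] .
    qed
    thus False by (rule contra)
  qed
  show ?thesis using n1 n2 by blast
qed


end
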